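(* Let $n,m\ge 1$ and let $f\in L^2((0,1)^n)$ and $h\in L^2((0,1)^m)$ be real-valued with $f$ not a.e. constant, and define $g(x,\xi)=f(x)+h(\xi)$ for $x\in(0,1)^n$, $\xi\in(0,1)^m$. Fix $i\in\{1,\dots,n\}$. Then $$S^g_{T_{x_i}}=\mu_{f,h}\,S^f_{T_{x_i}},\qquad \mu_{f,h}=\frac{1}{1+\frac{\mathrm{Var}(h)}{\mathrm{Var}(f)}}.$$ In particular $S^g_{T_{x_i}}\le S^f_{T_{x_i}}$.
   Context: All integrals are with respect to Lebesgue measure over the unit cubes (inputs independent, uniform on $[0,1]$). For a function $\varphi$, $\varphi_0=\int\varphi$ and $\mathrm{Var}(\varphi)=\int\varphi^2-\varphi_0^2$. For a square-integrable $\varphi$ of variables $(x,y)$ with $x=(x_1,\dots,x_n)$, $x_{\sim i}=(x_1,\dots,x_{i-1},x_{i+1},\dots,x_n)$, the total Sobol sensitivity index of $x_i$ is $$S^{\varphi}_{T_{x_i}}=\frac{\int\varphi^2\,dx\,dy-\int\big(\int\varphi\,dx_i\big)^2dx_{\sim i}\,dy}{\mathrm{Var}(\varphi)},$$ defined when $\mathrm{Var}(\varphi)>0$. *)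

theory Defs
  imports "HOL-Probability.Probability"
begin

definition unit_unif :: "real measure" where
  "unit_unif = uniform_measure lborel {0<..<1}"

text \<open>Lebesgue measure on the unit cube indexed by the finite set I
  (points are extensional functions I \<rightarrow> real).\<close>
definition cube :: "'i set \<Rightarrow> ('i \<Rightarrow> real) measure" where
  "cube I = PiM I (\<lambda>_. unit_unif)"

definition mean :: "'i set \<Rightarrow> (('i \<Rightarrow> real) \<Rightarrow> real) \<Rightarrow> real" where
  "mean I \<phi> = (\<integral>x. \<phi> x \<partial>cube I)"

definition Var :: "'i set \<Rightarrow> (('i \<Rightarrow> real) \<Rightarrow> real) \<Rightarrow> real" where
  "Var I \<phi> = (\<integral>x. (\<phi> x)\<^sup>2 \<partial>cube I) - (mean I \<phi>)\<^sup>2"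

text \<open>The inner integral
  integrates out the i-th coordinate; the result does not depend on the i-th
  coordinate, so integrating it over the whole cube equals integrating over
  the remaining variables.\<close>
definition sobol_total :: "'i set \<Rightarrow> 'i \<Rightarrow> (('i \<Rightarrow> real) \<Rightarrow> real) \<Rightarrow> real" where
  "sobol_total I i \<phi> =
     ((\<integral>x. (\<phi> x)\<^sup>2 \<partial>cube I)
      - (\<integral>x. (\<integral>t. \<phi> (x(i := t)) \<partial>unit_unif)\<^sup>2 \<partial>cube I)) / Var I \<phi>"

definition L2_cube :: "'i set \<Rightarrow> (('i \<Rightarrow> real) \<Rightarrow> real) \<Rightarrow> bool" where
  "L2_cube I \<phi> \<longleftrightarrow> \<phi> \<in> borel_measurable (cube I) \<and> integrable (cube I) (\<lambda>x. (\<phi> x)\<^sup>2)"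

end

theory Submission
  imports Defs
begin

lemma prob_unit_unif: "prob_space unit_unif"
  unfolding unit_unif_def by (rule prob_space_uniform_measure) auto

interpretation PU: product_sigma_finite "\<lambda>_. unit_unif"
  by (simp add: product_sigma_finite_def prob_unit_unif
     prob_space_imp_sigma_finite)

lemma prob_cube: "prob_space (cube I)"
  unfolding cube_def by (rule prob_space_PiM) (simp add: prob_unit_unif)

lemma space_unit_unif: "space unit_unif = UNIV"
  unfolding unit_unif_def by simp

lemma space_cube: "space (cube I) = PiE I (\<lambda>_. UNIV)"
  unfolding cube_def by (simp add: space_PiM space_unit_unif)

lemma upd_meas:
  assumes "i \<in> I"
  shows "(\<lambda>p. restrict ((fst p)(i := snd p)) I) \<in> measurable (cube I \<Otimes>\<^sub>M unit_unif) (cube I)"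
  unfolding cube_def
  apply (rule measurable_restrict)
  subgoal for j
    apply (cases "j = i")
     apply simp
    apply simp
    done
  done

lemma emeasure_unit_UNIV: "emeasure unit_unif UNIV = 1"
  using prob_space.emeasure_space_1[OF prob_unit_unif] by (simp add: space_unit_unif)

lemma upd_distr:
  assumes fin: "finite I" and i: "i \<in> I"
  shows "distr (cube I \<Otimes>\<^sub>M unit_unif) (cube I) (\<lambda>p. restrict ((fst p)(i := snd p)) I) = cube I"
proof -
  interpret P: pair_prob_space "cube I" unit_unif
    by (simp add: pair_prob_space_def pair_sigma_finite_def prob_cube prob_unit_unif prob_space_imp_sigma_finite)
  show ?thesis
    unfolding cube_def
  proof (rule PU.PiM_eqI[OF fin])
    fix S assume S: "\<And>j. j \<in> I \<Longrightarrow> S j \<in> sets unit_unif"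
    have pre: "(\<lambda>p. restrict ((fst p)(i := snd p)) I) -` PiE I S \<inter> space (PiM I (\<lambda>_. unit_unif) \<Otimes>\<^sub>M unit_unif)
       = PiE I (S(i:=UNIV)) \<times> S i"
      using i by (auto simp: space_pair_measure space_PiM space_unit_unif PiE_iff extensional_def split: if_splits)
    have m1: "PiE I (S(i:=UNIV)) \<in> sets (PiM I (\<lambda>_. unit_unif))"
      using S by (intro sets_PiM_I_finite[OF fin]) (auto simp: space_unit_unif[symmetric])
    have "emeasure (distr (PiM I (\<lambda>_. unit_unif) \<Otimes>\<^sub>M unit_unif) (PiM I (\<lambda>_. unit_unif)) (\<lambda>p. restrict ((fst p)(i := snd p)) I)) (PiE I S)
        = emeasure (PiM I (\<lambda>_. unit_unif) \<Otimes>\<^sub>M unit_unif) (PiE I (S(i:=UNIV)) \<times> S i)"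
      apply (subst emeasure_distr)
      using upd_meas[OF i] S fin pre by (auto simp: cube_def intro!: sets_PiM_I_finite)
    also have "\<dots> = emeasure (PiM I (\<lambda>_. unit_unif)) (PiE I (S(i:=UNIV))) * emeasure unit_unif (S i)"
      using sigma_finite_measure.emeasure_pair_measure_Times[OF prob_space_imp_sigma_finite[OF prob_unit_unif] m1 S[OF i]] by (simp add: cube_def)
    also have "\<dots> = (\<Prod>j\<in>I. emeasure unit_unif ((S(i:=UNIV)) j)) * emeasure unit_unif (S i)"
      using S fin by (subst PU.emeasure_PiM) (auto simp: space_unit_unif[symmetric])
    also have "\<dots> = (\<Prod>j\<in>I. emeasure unit_unif (S j))"
      using fin i
      by (simp add: prod.remove[OF fin i] emeasure_unit_UNIV mult.commute)
    finally show "emeasure (distr (PiM I (\<lambda>_. unit_unif) \<Otimes>\<^sub>M unit_unif) (PiM I (\<lambda>_. unit_unif)) (\<lambda>p. restrict ((fst p)(i := snd p)) I)) (PiE I S) = (\<Prod>j\<in>I. emeasure unit_unif (S j))" .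
  qed simp
qed

lemma jensen_sq:
  fixes \<psi> :: "'a \<Rightarrow> real"
  assumes P: "prob_space M" and m: "\<psi> \<in> borel_measurable M" and sq: "integrable M (\<lambda>t. (\<psi> t)\<^sup>2)"
  shows "(\<integral>t. \<psi> t \<partial>M)\<^sup>2 \<le> (\<integral>t. (\<psi> t)\<^sup>2 \<partial>M)"
proof -
  interpret prob_space M by fact
  have int: "integrable M \<psi>" by (rule square_integrable_imp_integrable[OF m sq])
  have "0 \<le> variance \<psi>" by (auto intro!: integral_nonneg_AE)
  then show ?thesis using variance_eq[OF int sq] by simp
qed

lemma ext_upd:
  assumes "x \<in> space (cube I)" "i \<in> I"
  shows "restrict (x(i := t)) I = x(i := t)"
  using assms by (auto simp: space_cube PiE_iff extensional_def restrict_def fun_eq_iff)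

lemma Qlemma:
  fixes \<phi> :: "('i \<Rightarrow> real) \<Rightarrow> real"
  assumes fin: "finite I" and i: "i \<in> I" and m: "\<phi> \<in> borel_measurable (cube I)"
    and sq: "integrable (cube I) (\<lambda>x. (\<phi> x)\<^sup>2)"
  defines "Q \<equiv> (\<lambda>x. \<integral>t. \<phi> (x(i := t)) \<partial>unit_unif)"
  shows "AE x in cube I. integrable unit_unif (\<lambda>t. \<phi> (x(i := t)))"
    and "integrable (cube I) Q" and "(\<integral>x. Q x \<partial>cube I) = (\<integral>x. \<phi> x \<partial>cube I)"
    and "integrable (cube I) (\<lambda>x. (Q x)\<^sup>2)"
    and "(\<integral>x. (Q x)\<^sup>2 \<partial>cube I) \<le> (\<integral>x. (\<phi> x)\<^sup>2 \<partial>cube I)"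
proof -
  interpret P: pair_prob_space "cube I" unit_unif
    by (simp add: pair_prob_space_def pair_sigma_finite_def prob_cube prob_unit_unif prob_space_imp_sigma_finite)
  interpret C: prob_space "cube I" by (rule prob_cube)
  let ?U = "\<lambda>p. restrict ((fst p)(i := snd p)) I"
  let ?F = "\<lambda>x t. \<phi> (?U (x, t))"
  have Um: "?U \<in> measurable (cube I \<Otimes>\<^sub>M unit_unif) (cube I)" by (rule upd_meas[OF i])
  have D: "distr (cube I \<Otimes>\<^sub>M unit_unif) (cube I) ?U = cube I" by (rule upd_distr[OF fin i])
  have int: "integrable (cube I) \<phi>" using finite_measure.square_integrable_imp_integrable[OF _ m sq] prob_cube prob_space_def by blast
  have Fm: "(\<lambda>p. \<phi> (?U p)) \<in> borel_measurable (cube I \<Otimes>\<^sub>M unit_unif)"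
    using measurable_comp[OF Um m] by (simp add: comp_def)
  have Fint: "integrable (cube I \<Otimes>\<^sub>M unit_unif) (case_prod ?F)"
    using integrable_distr_eq[OF Um m] int D by (simp add: case_prod_beta')
  have F2int: "integrable (cube I \<Otimes>\<^sub>M unit_unif) (case_prod (\<lambda>x t. (?F x t)\<^sup>2))"
  proof -
    have "(\<lambda>x. (\<phi> x)\<^sup>2) \<in> borel_measurable (cube I)" using m by simp
    from integrable_distr_eq[OF Um this] sq D show ?thesis by (simp add: case_prod_beta')
  qed
  have eqF: "?F x t = \<phi> (x(i := t))" if "x \<in> space (cube I)" for x t
    using ext_upd[OF that i] by simp
  have ae1: "AE x in cube I. integrable unit_unif (\<lambda>t. ?F x t)"
    by (rule P.AE_integrable_fst[OF Fint])
  then show ae: "AE x in cube I. integrable unit_unif (\<lambda>t. \<phi> (x(i := t)))"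
    by (rule AE_mp) (auto intro!: AE_I2 simp: ext_upd[OF _ i])
  have QF: "Q x = (\<integral>t. ?F x t \<partial>unit_unif)" if "x \<in> space (cube I)" for x
    unfolding Q_def using eqF[OF that] by simp
  have intQF: "integrable (cube I) (\<lambda>x. \<integral>t. ?F x t \<partial>unit_unif)"
    by (rule P.integrable_fst[OF Fint])
  show intQ: "integrable (cube I) Q"
    using intQF by (subst Bochner_Integration.integrable_cong[OF refl QF]) auto
  have "(\<integral>x. Q x \<partial>cube I) = (\<integral>x. (\<integral>t. ?F x t \<partial>unit_unif) \<partial>cube I)"
    by (rule Bochner_Integration.integral_cong) (simp_all add: QF del: fst_conv snd_conv)
  also have "\<dots> = integral\<^sup>L (cube I \<Otimes>\<^sub>M unit_unif) (case_prod ?F)"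
    by (rule P.integral_fst[OF Fint])
  also have "\<dots> = (\<integral>x. \<phi> x \<partial>cube I)"
    using integral_distr[OF Um m] D by (simp add: case_prod_beta')
  finally show "(\<integral>x. Q x \<partial>cube I) = (\<integral>x. \<phi> x \<partial>cube I)" .
  have ae2: "AE x in cube I. integrable unit_unif (\<lambda>t. (?F x t)\<^sup>2)"
    by (rule P.AE_integrable_fst[OF F2int])
  have intG: "integrable (cube I) (\<lambda>x. \<integral>t. (?F x t)\<^sup>2 \<partial>unit_unif)"
    by (rule P.integrable_fst[OF F2int])
  have bound: "AE x in cube I. (Q x)\<^sup>2 \<le> (\<integral>t. (?F x t)\<^sup>2 \<partial>unit_unif)"
    using ae2
  proof (rule AE_mp, intro AE_I2 impI)
    fix x assume x: "x \<in> space (cube I)" and ix: "integrable unit_unif (\<lambda>t. (?F x t)\<^sup>2)"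
    have "(\<lambda>t. ?F x t) \<in> borel_measurable unit_unif"
      using Fm x by measurable
    from jensen_sq[OF prob_unit_unif this ix] show "(Q x)\<^sup>2 \<le> (\<integral>t. (?F x t)\<^sup>2 \<partial>unit_unif)"
      by (simp add: QF[OF x])
  qed
  show "integrable (cube I) (\<lambda>x. (Q x)\<^sup>2)"
  proof (rule Bochner_Integration.integrable_bound[OF intG])
    show "(\<lambda>x. (Q x)\<^sup>2) \<in> borel_measurable (cube I)" using intQ by simp
    show "AE x in cube I. norm ((Q x)\<^sup>2) \<le> norm (\<integral>t. (?F x t)\<^sup>2 \<partial>unit_unif)"
      using bound by (rule AE_mp) (auto intro!: AE_I2)
  qed
  have "(\<integral>x. (Q x)\<^sup>2 \<partial>cube I) \<le> (\<integral>x. (\<integral>t. (?F x t)\<^sup>2 \<partial>unit_unif) \<partial>cube I)"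
    by (rule integral_mono_AE'[OF intG bound]) (auto intro!: AE_I2 integral_nonneg)
  also have "\<dots> = integral\<^sup>L (cube I \<Otimes>\<^sub>M unit_unif) (case_prod (\<lambda>x t. (?F x t)\<^sup>2))"
    by (rule P.integral_fst[OF F2int])
  also have "\<dots> = (\<integral>x. (\<phi> x)\<^sup>2 \<partial>cube I)"
  proof -
    have "(\<lambda>x. (\<phi> x)\<^sup>2) \<in> borel_measurable (cube I)" using m by simp
    from integral_distr[OF Um this] D show ?thesis by (simp add: case_prod_beta')
  qed
  finally show "(\<integral>x. (Q x)\<^sup>2 \<partial>cube I) \<le> (\<integral>x. (\<phi> x)\<^sup>2 \<partial>cube I)" .
qed

lemma distr_pair_snd':
  assumes N: "prob_space N" and M: "prob_space M"
  shows "distr (N \<Otimes>\<^sub>M M) M snd = M"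
proof (intro measure_eqI)
  interpret N: prob_space N by fact
  interpret M: prob_space M by fact
  fix A assume A: "A \<in> sets (distr (N \<Otimes>\<^sub>M M) M snd)"
  from A have "emeasure (distr (N \<Otimes>\<^sub>M M) M snd) A = emeasure (N \<Otimes>\<^sub>M M) (space N \<times> A)"
    by (auto simp add: emeasure_distr space_pair_measure dest: sets.sets_into_space intro!: arg_cong2[where f=emeasure])
  with A show "emeasure (distr (N \<Otimes>\<^sub>M M) M snd) A = emeasure M A"
    by (simp add: M.emeasure_pair_measure_Times N.emeasure_space_1)
qed simp

lemma pair_expand:
  fixes u :: "'a \<Rightarrow> real" and v :: "'b \<Rightarrow> real"
  assumes N: "prob_space N" and M: "prob_space M"
    and um: "u \<in> borel_measurable N" and vm: "v \<in> borel_measurable M"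
    and u2: "integrable N (\<lambda>x. (u x)\<^sup>2)" and v2: "integrable M (\<lambda>x. (v x)\<^sup>2)"
  shows "integrable (N \<Otimes>\<^sub>M M) (\<lambda>p. (u (fst p) + v (snd p))\<^sup>2)"
    and "(\<integral>p. (u (fst p) + v (snd p))\<^sup>2 \<partial>(N \<Otimes>\<^sub>M M)) =
         (\<integral>x. (u x)\<^sup>2 \<partial>N) + 2 * (\<integral>x. u x \<partial>N) * (\<integral>y. v y \<partial>M) + (\<integral>y. (v y)\<^sup>2 \<partial>M)"
    and "integrable (N \<Otimes>\<^sub>M M) (\<lambda>p. u (fst p) + v (snd p))"
    and "(\<integral>p. u (fst p) + v (snd p) \<partial>(N \<Otimes>\<^sub>M M)) = (\<integral>x. u x \<partial>N) + (\<integral>y. v y \<partial>M)"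
proof -
  interpret N: prob_space N by fact
  interpret M: prob_space M by fact
  interpret P: pair_sigma_finite N M
    by (simp add: pair_sigma_finite_def N M prob_space_imp_sigma_finite)
  have ui: "integrable N u" by (rule N.square_integrable_imp_integrable[OF um u2])
  have vi: "integrable M v" by (rule M.square_integrable_imp_integrable[OF vm v2])
  have Df: "distr (N \<Otimes>\<^sub>M M) N fst = N" by (rule M.distr_pair_fst)
  have Ds: "distr (N \<Otimes>\<^sub>M M) M snd = M" by (rule distr_pair_snd'[OF N M])
  have i1: "integrable (N \<Otimes>\<^sub>M M) (\<lambda>p. u (fst p))"
    using integrable_distr_eq[OF measurable_fst[of N M] um] ui Df by simp
  have i2: "integrable (N \<Otimes>\<^sub>M M) (\<lambda>p. v (snd p))"
    using integrable_distr_eq[OF measurable_snd[of N M] vm] vi Ds by simp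
  have um2: "(\<lambda>x. (u x)\<^sup>2) \<in> borel_measurable N" using um by simp
  have vm2: "(\<lambda>x. (v x)\<^sup>2) \<in> borel_measurable M" using vm by simp
  have i3: "integrable (N \<Otimes>\<^sub>M M) (\<lambda>p. (u (fst p))\<^sup>2)"
    using integrable_distr_eq[OF measurable_fst[of N M] um2] u2 Df by simp
  have i4: "integrable (N \<Otimes>\<^sub>M M) (\<lambda>p. (v (snd p))\<^sup>2)"
    using integrable_distr_eq[OF measurable_snd[of N M] vm2] v2 Ds by simp
  have e1: "(\<integral>p. u (fst p) \<partial>(N \<Otimes>\<^sub>M M)) = (\<integral>x. u x \<partial>N)"
    using integral_distr[OF measurable_fst[of N M] um] Df by simp
  have e2: "(\<integral>p. v (snd p) \<partial>(N \<Otimes>\<^sub>M M)) = (\<integral>x. v x \<partial>M)"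
    using integral_distr[OF measurable_snd[of N M] vm] Ds by simp
  have e3: "(\<integral>p. (u (fst p))\<^sup>2 \<partial>(N \<Otimes>\<^sub>M M)) = (\<integral>x. (u x)\<^sup>2 \<partial>N)"
    using integral_distr[OF measurable_fst[of N M] um2] Df by simp
  have e4: "(\<integral>p. (v (snd p))\<^sup>2 \<partial>(N \<Otimes>\<^sub>M M)) = (\<integral>x. (v x)\<^sup>2 \<partial>M)"
    using integral_distr[OF measurable_snd[of N M] vm2] Ds by simp
  have i5: "integrable (N \<Otimes>\<^sub>M M) (\<lambda>p. u (fst p) * v (snd p))"
  proof (rule Bochner_Integration.integrable_bound[OF Bochner_Integration.integrable_add[OF i3 i4]])
    show "(\<lambda>p. u (fst p) * v (snd p)) \<in> borel_measurable (N \<Otimes>\<^sub>M M)" using um vm by measurable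
    show "AE p in N \<Otimes>\<^sub>M M. norm (u (fst p) * v (snd p)) \<le> norm ((u (fst p))\<^sup>2 + (v (snd p))\<^sup>2)"
    proof (intro AE_I2)
      fix p
      have "\<bar>u (fst p)\<bar> * \<bar>v (snd p)\<bar> \<le> (u (fst p))\<^sup>2 + (v (snd p))\<^sup>2"
      proof -
        have "2 * \<bar>u (fst p)\<bar> * \<bar>v (snd p)\<bar> \<le> \<bar>u (fst p)\<bar>\<^sup>2 + \<bar>v (snd p)\<bar>\<^sup>2"
          by (rule sum_squares_bound)
        moreover have "0 \<le> \<bar>u (fst p)\<bar> * \<bar>v (snd p)\<bar>" by simp
        ultimately show ?thesis by (simp only: power2_abs)
      qed
      then show "norm (u (fst p) * v (snd p)) \<le> norm ((u (fst p))\<^sup>2 + (v (snd p))\<^sup>2)"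
        by (simp add: abs_mult)
    qed
  qed
  have e5: "(\<integral>p. u (fst p) * v (snd p) \<partial>(N \<Otimes>\<^sub>M M)) = (\<integral>x. u x \<partial>N) * (\<integral>y. v y \<partial>M)"
  proof -
    have "integrable (N \<Otimes>\<^sub>M M) (case_prod (\<lambda>x y. u x * v y))" using i5 by (simp add: case_prod_beta')
    from P.integral_fst[OF this] show ?thesis by (simp add: case_prod_beta')
  qed
  have sq: "(u (fst p) + v (snd p))\<^sup>2 = (u (fst p))\<^sup>2 + 2 * (u (fst p) * v (snd p)) + (v (snd p))\<^sup>2" for p
    by (simp add: power2_sum)
  show "integrable (N \<Otimes>\<^sub>M M) (\<lambda>p. (u (fst p) + v (snd p))\<^sup>2)"
    unfolding sq using i3 i4 i5 by simp
  show "(\<integral>p. (u (fst p) + v (snd p))\<^sup>2 \<partial>(N \<Otimes>\<^sub>M M)) =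
         (\<integral>x. (u x)\<^sup>2 \<partial>N) + 2 * (\<integral>x. u x \<partial>N) * (\<integral>y. v y \<partial>M) + (\<integral>y. (v y)\<^sup>2 \<partial>M)"
    unfolding sq using i3 i4 i5 e3 e4 e5 by simp
  show "integrable (N \<Otimes>\<^sub>M M) (\<lambda>p. u (fst p) + v (snd p))" using i1 i2 by simp
  show "(\<integral>p. u (fst p) + v (snd p) \<partial>(N \<Otimes>\<^sub>M M)) = (\<integral>x. u x \<partial>N) + (\<integral>y. v y \<partial>M)"
    using i1 i2 e1 e2 by simp
qed

definition Phi :: "'a set \<Rightarrow> 'b set \<Rightarrow> ('a \<Rightarrow> real) \<times> ('b \<Rightarrow> real) \<Rightarrow> ('a + 'b \<Rightarrow> real)" where
  "Phi A B p = (\<lambda>k\<in>Inl ` A \<union> Inr ` B. case_sum (fst p) (snd p) k)"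

lemma Phi_meas: "Phi A B \<in> measurable (cube A \<Otimes>\<^sub>M cube B) (cube (Inl ` A \<union> Inr ` B))"
  unfolding Phi_def cube_def
proof (rule measurable_restrict)
  fix k assume k: "k \<in> Inl ` A \<union> Inr ` B"
  show "(\<lambda>p. case_sum (fst p) (snd p) k) \<in> measurable (PiM A (\<lambda>_. unit_unif) \<Otimes>\<^sub>M PiM B (\<lambda>_. unit_unif)) unit_unif"
  proof (cases k)
    case (Inl a) with k have "a \<in> A" by auto
    then show ?thesis using Inl by simp
  next
    case (Inr b) with k have "b \<in> B" by auto
    then show ?thesis using Inr by simp
  qed
qed

lemma Phi_distr:
  assumes fA: "finite A" and fB: "finite B"
  shows "distr (cube A \<Otimes>\<^sub>M cube B) (cube (Inl ` A \<union> Inr ` B)) (Phi A B) = cube (Inl ` A \<union> Inr ` B)"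
proof -
  let ?K = "Inl ` A \<union> Inr ` B"
  have fK: "finite ?K" using fA fB by simp
  interpret B: prob_space "cube B" by (rule prob_cube)
  show ?thesis
    unfolding cube_def
  proof (rule PU.PiM_eqI[OF fK])
    fix S assume S: "\<And>k. k \<in> ?K \<Longrightarrow> S k \<in> sets unit_unif"
    have pre: "Phi A B -` PiE ?K S \<inter> space (PiM A (\<lambda>_. unit_unif) \<Otimes>\<^sub>M PiM B (\<lambda>_. unit_unif))
       = PiE A (\<lambda>j. S (Inl j)) \<times> PiE B (\<lambda>j. S (Inr j))"
      by (auto simp: Phi_def space_pair_measure space_PiM space_unit_unif PiE_iff extensional_def) (metis UnI1 imageI sum.case(1), metis UnI2 imageI sum.case(2))
    have m1: "PiE A (\<lambda>j. S (Inl j)) \<in> sets (PiM A (\<lambda>_. unit_unif))"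
      using S by (intro sets_PiM_I_finite[OF fA]) auto
    have m2: "PiE B (\<lambda>j. S (Inr j)) \<in> sets (PiM B (\<lambda>_. unit_unif))"
      using S by (intro sets_PiM_I_finite[OF fB]) auto
    have "emeasure (distr (PiM A (\<lambda>_. unit_unif) \<Otimes>\<^sub>M PiM B (\<lambda>_. unit_unif)) (PiM ?K (\<lambda>_. unit_unif)) (Phi A B)) (PiE ?K S)
        = emeasure (PiM A (\<lambda>_. unit_unif) \<Otimes>\<^sub>M PiM B (\<lambda>_. unit_unif)) (PiE A (\<lambda>j. S (Inl j)) \<times> PiE B (\<lambda>j. S (Inr j)))"
      apply (subst emeasure_distr)
      using Phi_meas[of A B] S fK pre by (auto simp: cube_def intro!: sets_PiM_I_finite)
    also have "\<dots> = emeasure (PiM A (\<lambda>_. unit_unif)) (PiE A (\<lambda>j. S (Inl j))) * emeasure (PiM B (\<lambda>_. unit_unif)) (PiE B (\<lambda>j. S (Inr j)))"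
      using B.emeasure_pair_measure_Times[OF m1 m2[folded cube_def]] by (simp add: cube_def)
    also have "\<dots> = (\<Prod>j\<in>A. emeasure unit_unif (S (Inl j))) * (\<Prod>j\<in>B. emeasure unit_unif (S (Inr j)))"
      using S fA fB by (simp add: PU.emeasure_PiM)
    also have "\<dots> = (\<Prod>k\<in>?K. emeasure unit_unif (S k))"
    proof -
      have d: "Inl ` A \<inter> Inr ` B = {}" by auto
      show ?thesis
        using fA fB by (simp add: prod.union_disjoint[OF _ _ d] prod.reindex)
    qed
    finally show "emeasure (distr (PiM A (\<lambda>_. unit_unif) \<Otimes>\<^sub>M PiM B (\<lambda>_. unit_unif)) (PiM ?K (\<lambda>_. unit_unif)) (Phi A B)) (PiE ?K S) = (\<Prod>k\<in>?K. emeasure unit_unif (S k))" .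
  qed simp
qed

lemma projA_meas: "(\<lambda>z j. z (Inl j)) \<in> measurable (cube (Inl ` A \<union> Inr ` B)) (cube A)"
  unfolding cube_def
  by (rule measurable_PiM_single') (auto simp: space_PiM PiE_iff extensional_def space_unit_unif)

lemma projB_meas: "(\<lambda>z j. z (Inr j)) \<in> measurable (cube (Inl ` A \<union> Inr ` B)) (cube B)"
  unfolding cube_def
  by (rule measurable_PiM_single') (auto simp: space_PiM PiE_iff extensional_def space_unit_unif)

lemma Phi_projA: "p \<in> space (cube A \<Otimes>\<^sub>M cube B) \<Longrightarrow> (\<lambda>j. Phi A B p (Inl j)) = fst p"
  by (auto simp: Phi_def space_pair_measure space_cube PiE_iff extensional_def fun_eq_iff)

lemma Phi_projB: "p \<in> space (cube A \<Otimes>\<^sub>M cube B) \<Longrightarrow> (\<lambda>j. Phi A B p (Inr j)) = snd p"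
  by (auto simp: Phi_def space_pair_measure space_cube PiE_iff extensional_def fun_eq_iff)

lemma Phi_updA: "p \<in> space (cube A \<Otimes>\<^sub>M cube B) \<Longrightarrow> i \<in> A \<Longrightarrow>
   (\<lambda>j. ((Phi A B p)(Inl i := t)) (Inl j)) = (fst p)(i := t)"
  by (auto simp: Phi_def space_pair_measure space_cube PiE_iff extensional_def fun_eq_iff)

lemma Phi_updB: "p \<in> space (cube A \<Otimes>\<^sub>M cube B) \<Longrightarrow>
   (\<lambda>j. ((Phi A B p)(Inl i := t)) (Inr j)) = snd p"
  by (auto simp: Phi_def space_pair_measure space_cube PiE_iff extensional_def fun_eq_iff)

lemma var_eq:
  fixes \<phi> :: "('i \<Rightarrow> real) \<Rightarrow> real"
  assumes m: "\<phi> \<in> borel_measurable (cube I)" and sq: "integrable (cube I) (\<lambda>x. (\<phi> x)\<^sup>2)"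
  shows "Var I \<phi> = (\<integral>x. (\<phi> x - mean I \<phi>)\<^sup>2 \<partial>cube I)"
    and "integrable (cube I) (\<lambda>x. (\<phi> x - mean I \<phi>)\<^sup>2)"
proof -
  interpret C: prob_space "cube I" by (rule prob_cube)
  have int: "integrable (cube I) \<phi>" by (rule C.square_integrable_imp_integrable[OF m sq])
  show "Var I \<phi> = (\<integral>x. (\<phi> x - mean I \<phi>)\<^sup>2 \<partial>cube I)"
    using C.variance_eq[OF int sq] unfolding Var_def mean_def by simp
  have "(\<lambda>x. (\<phi> x - mean I \<phi>)\<^sup>2) = (\<lambda>x. (\<phi> x)\<^sup>2 - 2 * mean I \<phi> * \<phi> x + (mean I \<phi>)\<^sup>2)"
    by (simp add: power2_diff fun_eq_iff algebra_simps)
  then show "integrable (cube I) (\<lambda>x. (\<phi> x - mean I \<phi>)\<^sup>2)"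
    using int sq by simp
qed

lemma var_nonneg:
  fixes \<phi> :: "('i \<Rightarrow> real) \<Rightarrow> real"
  assumes m: "\<phi> \<in> borel_measurable (cube I)" and sq: "integrable (cube I) (\<lambda>x. (\<phi> x)\<^sup>2)"
  shows "0 \<le> Var I \<phi>"
  using var_eq[OF m sq] by (simp add: integral_nonneg_AE)

lemma var_pos:
  fixes \<phi> :: "('i \<Rightarrow> real) \<Rightarrow> real"
  assumes m: "\<phi> \<in> borel_measurable (cube I)" and sq: "integrable (cube I) (\<lambda>x. (\<phi> x)\<^sup>2)"
    and nc: "\<not> (\<exists>c. AE x in cube I. \<phi> x = c)"
  shows "0 < Var I \<phi>"
proof (rule ccontr)
  assume "\<not> 0 < Var I \<phi>"
  with var_nonneg[OF m sq] have "Var I \<phi> = 0" by simp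
  then have "(\<integral>x. (\<phi> x - mean I \<phi>)\<^sup>2 \<partial>cube I) = 0" using var_eq[OF m sq] by simp
  then have "AE x in cube I. (\<phi> x - mean I \<phi>)\<^sup>2 = 0"
    using integral_nonneg_eq_0_iff_AE[OF var_eq(2)[OF m sq]] by simp
  then have "AE x in cube I. \<phi> x = mean I \<phi>" by (rule AE_mp) (auto intro!: AE_I2)
  with nc show False by blast
qed

theorem theorem2:
  fixes n m :: nat and i :: nat
    and f :: "(nat \<Rightarrow> real) \<Rightarrow> real" and h :: "(nat \<Rightarrow> real) \<Rightarrow> real"
    and g :: "(nat + nat \<Rightarrow> real) \<Rightarrow> real"
  assumes "n \<ge> 1" and "m \<ge> 1"
    and "L2_cube {1..n} f" and "L2_cube {1..m} h"
    and "\<not> (\<exists>c. AE x in cube {1..n}. f x = c)"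
    and "\<And>z. g z = f (\<lambda>j. z (Inl j)) + h (\<lambda>j. z (Inr j))"
    and "i \<in> {1..n}"
  shows "sobol_total (Inl ` {1..n} \<union> Inr ` {1..m}) (Inl i) g
           = (1 / (1 + Var {1..m} h / Var {1..n} f)) * sobol_total {1..n} i f
         \<and> sobol_total (Inl ` {1..n} \<union> Inr ` {1..m}) (Inl i) g \<le> sobol_total {1..n} i f"
proof -
  define A where "A = {1..n}"
  define B where "B = {1..m}"
  define K where "K = Inl ` A \<union> Inr ` B"
  have fA: "finite A" and fB: "finite B" and fK: "finite K" by (simp_all add: A_def B_def K_def)
  have iA: "i \<in> A" using assms(7) by (simp add: A_def)
  have iK: "Inl i \<in> K" using iA by (simp add: K_def)
  have fm: "f \<in> borel_measurable (cube A)" and f2: "integrable (cube A) (\<lambda>x. (f x)\<^sup>2)"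
    using assms(3) by (simp_all add: L2_cube_def A_def)
  have hm: "h \<in> borel_measurable (cube B)" and h2: "integrable (cube B) (\<lambda>x. (h x)\<^sup>2)"
    using assms(4) by (simp_all add: L2_cube_def B_def)
  have nc: "\<not> (\<exists>c. AE x in cube A. f x = c)" unfolding A_def by (rule assms(5))
  have geq: "g = (\<lambda>z. f (\<lambda>j. z (Inl j)) + h (\<lambda>j. z (Inr j)))" using assms(6) by (simp add: fun_eq_iff)
  interpret CA: prob_space "cube A" by (rule prob_cube)
  interpret CB: prob_space "cube B" by (rule prob_cube)
  interpret P: pair_sigma_finite "cube A" "cube B"
    by (simp add: pair_sigma_finite_def prob_cube prob_space_imp_sigma_finite)
  let ?P = "cube A \<Otimes>\<^sub>M cube B"
  have Pm: "Phi A B \<in> measurable ?P (cube K)" unfolding K_def by (rule Phi_meas)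
  have D: "distr ?P (cube K) (Phi A B) = cube K" unfolding K_def by (rule Phi_distr[OF fA fB])
  have gm: "g \<in> borel_measurable (cube K)"
  proof -
    have "(\<lambda>z. f (\<lambda>j. z (Inl j))) \<in> borel_measurable (cube K)"
      using measurable_comp[OF projA_meas fm] by (simp add: comp_def K_def)
    moreover have "(\<lambda>z. h (\<lambda>j. z (Inr j))) \<in> borel_measurable (cube K)"
      using measurable_comp[OF projB_meas hm] by (simp add: comp_def K_def)
    ultimately show ?thesis unfolding geq by simp
  qed
  have g2m: "(\<lambda>z. (g z)\<^sup>2) \<in> borel_measurable (cube K)" using gm by simp
  have gPhi: "g (Phi A B p) = f (fst p) + h (snd p)" if "p \<in> space ?P" for p
    unfolding geq using Phi_projA[OF that] Phi_projB[OF that] by simp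
  note PE = pair_expand[OF prob_cube prob_cube fm hm f2 h2]
  have g2: "integrable (cube K) (\<lambda>z. (g z)\<^sup>2)"
  proof -
    have "integrable ?P (\<lambda>p. (g (Phi A B p))\<^sup>2)"
      using PE(1) by (subst Bochner_Integration.integrable_cong[OF refl]) (simp_all add: gPhi)
    then show ?thesis using integrable_distr_eq[OF Pm g2m] D by simp
  qed
  have G2: "(\<integral>z. (g z)\<^sup>2 \<partial>cube K) = (\<integral>x. (f x)\<^sup>2 \<partial>cube A) + 2 * (\<integral>x. f x \<partial>cube A) * (\<integral>y. h y \<partial>cube B) + (\<integral>y. (h y)\<^sup>2 \<partial>cube B)"
  proof -
    have "(\<integral>z. (g z)\<^sup>2 \<partial>cube K) = (\<integral>p. (g (Phi A B p))\<^sup>2 \<partial>?P)"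
      using integral_distr[OF Pm g2m] D by simp
    also have "\<dots> = (\<integral>p. (f (fst p) + h (snd p))\<^sup>2 \<partial>?P)"
      by (rule Bochner_Integration.integral_cong) (simp_all add: gPhi)
    finally show ?thesis using PE(2) by simp
  qed
  have G1: "mean K g = (\<integral>x. f x \<partial>cube A) + (\<integral>y. h y \<partial>cube B)"
  proof -
    have "mean K g = (\<integral>p. g (Phi A B p) \<partial>?P)"
      unfolding mean_def using integral_distr[OF Pm gm] D by simp
    also have "\<dots> = (\<integral>p. f (fst p) + h (snd p) \<partial>?P)"
      by (rule Bochner_Integration.integral_cong) (simp_all add: gPhi)
    finally show ?thesis using PE(4) by simp
  qed
  have VarK: "Var K g = Var A f + Var B h"
    unfolding Var_def G2 G1 unfolding mean_def by (simp add: power2_sum)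
  note QA = Qlemma[OF fA iA fm f2]
  note QK = Qlemma[OF fK iK gm g2]
  define Qf where "Qf = (\<lambda>x. \<integral>t. f (x(i := t)) \<partial>unit_unif)"
  define Qg where "Qg = (\<lambda>z. \<integral>t. g (z(Inl i := t)) \<partial>unit_unif)"
  have Qfm: "Qf \<in> borel_measurable (cube A)" using QA(2) unfolding Qf_def by simp
  have Qf2: "integrable (cube A) (\<lambda>x. (Qf x)\<^sup>2)" using QA(4) unfolding Qf_def by simp
  have Qg2m: "(\<lambda>z. (Qg z)\<^sup>2) \<in> borel_measurable (cube K)" using QK(2) unfolding Qg_def by simp
  have aeP: "AE p in ?P. integrable unit_unif (\<lambda>t. f ((fst p)(i := t)))"
  proof -
    have "AE x in distr ?P (cube A) fst. integrable unit_unif (\<lambda>t. f (x(i := t)))"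
      by (subst CB.distr_pair_fst) (rule QA(1))
    from AE_distrD[OF measurable_fst[of "cube A" "cube B"] this] show ?thesis .
  qed
  have QgPhi: "AE p in ?P. Qg (Phi A B p) = Qf (fst p) + h (snd p)"
    using aeP
  proof (rule AE_mp, intro AE_I2 impI)
    fix p assume p: "p \<in> space ?P" and ip: "integrable unit_unif (\<lambda>t. f ((fst p)(i := t)))"
    have "Qg (Phi A B p) = (\<integral>t. f ((fst p)(i := t)) + h (snd p) \<partial>unit_unif)"
      unfolding Qg_def geq using Phi_updA[OF p iA] Phi_updB[OF p] by simp
    also have "\<dots> = Qf (fst p) + h (snd p)"
      using ip prob_space.prob_space[OF prob_unit_unif] unfolding Qf_def by (subst Bochner_Integration.integral_add) (simp_all add: finite_measure.integrable_const[OF prob_space.finite_measure[OF prob_unit_unif]])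
    finally show "Qg (Phi A B p) = Qf (fst p) + h (snd p)" .
  qed
  note PQ = pair_expand[OF prob_cube prob_cube Qfm hm Qf2 h2]
  have QG2: "(\<integral>z. (Qg z)\<^sup>2 \<partial>cube K) = (\<integral>x. (Qf x)\<^sup>2 \<partial>cube A) + 2 * (\<integral>x. f x \<partial>cube A) * (\<integral>y. h y \<partial>cube B) + (\<integral>y. (h y)\<^sup>2 \<partial>cube B)"
  proof -
    have "(\<integral>z. (Qg z)\<^sup>2 \<partial>cube K) = (\<integral>p. (Qg (Phi A B p))\<^sup>2 \<partial>?P)"
      using integral_distr[OF Pm Qg2m] D by simp
    also have "\<dots> = (\<integral>p. (Qf (fst p) + h (snd p))\<^sup>2 \<partial>?P)"
    proof (rule integral_cong_AE)
      show "(\<lambda>p. (Qg (Phi A B p))\<^sup>2) \<in> borel_measurable ?P"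
        using measurable_comp[OF Pm Qg2m] by (simp add: comp_def)
      show "(\<lambda>p. (Qf (fst p) + h (snd p))\<^sup>2) \<in> borel_measurable ?P"
        using Qfm hm by measurable
      show "AE p in ?P. (Qg (Phi A B p))\<^sup>2 = (Qf (fst p) + h (snd p))\<^sup>2"
        using QgPhi by (rule AE_mp) (auto intro!: AE_I2)
    qed
    finally show ?thesis using PQ(2) QA(3) unfolding Qf_def by simp
  qed
  have Nf: "(\<integral>x. (Qf x)\<^sup>2 \<partial>cube A) \<le> (\<integral>x. (f x)\<^sup>2 \<partial>cube A)" using QA(5) unfolding Qf_def by simp
  have SK: "sobol_total K (Inl i) g = ((\<integral>x. (f x)\<^sup>2 \<partial>cube A) - (\<integral>x. (Qf x)\<^sup>2 \<partial>cube A)) / (Var A f + Var B h)"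
    unfolding sobol_total_def VarK using G2 QG2 unfolding Qg_def by simp
  have SA: "sobol_total A i f = ((\<integral>x. (f x)\<^sup>2 \<partial>cube A) - (\<integral>x. (Qf x)\<^sup>2 \<partial>cube A)) / Var A f"
    unfolding sobol_total_def Qf_def by simp
  have vf: "0 < Var A f" by (rule var_pos[OF fm f2 nc])
  have vh: "0 \<le> Var B h" by (rule var_nonneg[OF hm h2])
  define N where "N = (\<integral>x. (f x)\<^sup>2 \<partial>cube A) - (\<integral>x. (Qf x)\<^sup>2 \<partial>cube A)"
  have N0: "0 \<le> N" using Nf by (simp add: N_def)
  have e1: "sobol_total K (Inl i) g = (1 / (1 + Var B h / Var A f)) * sobol_total A i f"
    unfolding SK SA N_def[symmetric] using vf vh by (simp add: field_simps)
  have e2: "sobol_total K (Inl i) g \<le> sobol_total A i f"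
    unfolding SK SA N_def[symmetric] using vf vh N0
    by (simp add: divide_left_mono add_pos_nonneg)
  show ?thesis using e1 e2 by (simp add: A_def B_def K_def)
qed

end
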